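(* Let $\alpha>0$. Then $R(\alpha,u)\in L^1(\mathbb{R}^N)$ for every $u\in W^{s,p}(\mathbb{R}^N)$.
   Context: $s\in(0,1)$, $p>2$, $N=sp$; $W^{s,p}(\mathbb{R}^N)$ is the fractional Sobolev space. $k_p=\min\{k\in\mathbb{N}:k\ge p\}$ and $R(\alpha,t)=\exp(\alpha|t|^{N/(N-s)})-\sum_{k=0}^{k_p-2}\frac{\alpha^k}{k!}|t|^{\frac{N}{N-s}k}$; $R(\alpha,u)$ denotes the function $x\mapsto R(\alpha,u(x))$. *)

theory Defs
  imports "HOL-Analysis.Analysis"
begin

definition kp :: "real \<Rightarrow> nat" where
  "kp p = nat \<lceil>p\<rceil>"

definition Rfun :: "nat \<Rightarrow> real \<Rightarrow> real \<Rightarrow> real \<Rightarrow> real \<Rightarrow> real" where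
  "Rfun N s p \<alpha> t =
     exp (\<alpha> * \<bar>t\<bar> powr (real N / (real N - s)))
     - (\<Sum>k\<in>{0..kp p - 2}. \<alpha> ^ k / fact k * (\<bar>t\<bar> powr (real N / (real N - s))) ^ k)"

text \<open>Fractional Sobolev space W^{s,p}(R^N), with R^N modelled by a euclidean space of
  dimension N = DIM('a): u in L^p and finite Gagliardo seminorm.\<close>
definition frac_sobolev :: "real \<Rightarrow> real \<Rightarrow> ('a::euclidean_space \<Rightarrow> real) set" where
  "frac_sobolev s p = {u. u \<in> borel_measurable lborel
      \<and> integrable lborel (\<lambda>x. \<bar>u x\<bar> powr p)
      \<and> integrable (lborel \<Otimes>\<^sub>M lborel)
          (\<lambda>(x,y). \<bar>u x - u y\<bar> powr p / norm (x - y) powr (real DIM('a) + s * p))}"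

end

theory Submission
  imports Defs
begin
definition En :: "real \<Rightarrow> ('a::euclidean_space \<Rightarrow> real) \<Rightarrow> ennreal" where
  "En p f = (\<integral>\<^sup>+z. ennreal (\<bar>f (fst z) - f (snd z)\<bar> powr p / norm (fst z - snd z) powr (2 * real DIM('a))) \<partial>(lborel \<Otimes>\<^sub>M lborel))"

lemma cap:
  fixes f :: "'a::euclidean_space \<Rightarrow> real" and A S :: "'a set"
  assumes f[measurable]: "f \<in> borel_measurable lborel"
    and A[measurable]: "A \<in> sets lborel" and S[measurable]: "S \<in> sets lborel"
    and fin: "emeasure lborel S < \<infinity>" and AS: "A \<subseteq> S" and h: "h > 0" and p: "p > 0"
    and sep: "\<And>x y. x \<in> A \<Longrightarrow> y \<notin> S \<Longrightarrow> h \<le> \<bar>f x - f y\<bar>"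
  shows "ennreal ((unit_ball_vol DIM('a))^2 / 4 * h powr p) * emeasure lborel A \<le> emeasure lborel S * En p f"
proof -
  have Sb[measurable]: "S \<in> sets borel" and Ab[measurable]: "A \<in> sets borel" using S A by auto
  define \<sigma> where "\<sigma> = measure lborel S"
  have eS: "emeasure lborel S = ennreal \<sigma>" using fin by (simp add: \<sigma>_def emeasure_eq_ennreal_measure)
  show ?thesis
  proof (cases "\<sigma> = 0")
    case True
    have "emeasure lborel A \<le> emeasure lborel S" by (rule emeasure_mono[OF AS]) (use S in simp)
    then have "emeasure lborel A = 0" using True eS by simp
    then show ?thesis by simp
  next
    case False
    then have sp: "\<sigma> > 0" using measure_nonneg[of lborel S] unfolding \<sigma>_def by linarith
    define N where "N = DIM('a)"
    have N: "N \<ge> 1" unfolding N_def by (simp add: DIM_positive Suc_leI)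
    define \<omega> where "\<omega> = unit_ball_vol (real N)"
    have \<omega>: "\<omega> > 0" unfolding \<omega>_def by simp
    define R where "R = (2 * \<sigma> / \<omega>) powr (1 / real N)"
    have R: "R > 0" unfolding R_def using sp \<omega> by simp
    have RN: "R ^ N = 2 * \<sigma> / \<omega>"
    proof -
      have "R ^ N = R powr (real N)" using R by (simp add: powr_realpow)
      also have "\<dots> = 2 * \<sigma> / \<omega>" unfolding R_def using sp \<omega> N by (simp add: powr_powr)
      finally show ?thesis .
    qed
    have R2N: "R powr (2 * real N) = (2 * \<sigma> / \<omega>)^2"
    proof -
      have "R powr (2 * real N) = R powr (real (2 * N))" by simp
      also have "\<dots> = R ^ (2 * N)" using R by (rule powr_realpow)
      also have "\<dots> = (R ^ N)^2" by (simp add: power_mult mult.commute)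
      finally have "R powr (2 * real N) = (R ^ N)^2" .
      then show ?thesis using RN by simp
    qed
    define c0 where "c0 = h powr p * \<omega>^2 / (4 * \<sigma>)"
    have inner: "ennreal c0 \<le> (\<integral>\<^sup>+y. ennreal (\<bar>f x - f y\<bar> powr p / norm (x - y) powr (2 * real DIM('a))) \<partial>lborel)"
      if x: "x \<in> A" for x
    proof -
      have "emeasure lborel (ball x R) = ennreal (\<omega> * R ^ N)"
        using R by (simp add: emeasure_ball \<omega>_def N_def)
      also have "\<omega> * R ^ N = 2 * \<sigma>" using \<omega> RN by simp
      finally have eb: "emeasure lborel (ball x R) = ennreal (2 * \<sigma>)" .
      have sub: "emeasure lborel (ball x R) \<le> emeasure lborel (ball x R - S) + emeasure lborel S"
        by (rule order_trans[OF emeasure_mono emeasure_subadditive]) (auto simp: Sb)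
      have le: "ennreal (2 * \<sigma>) \<le> emeasure lborel (ball x R - S) + ennreal \<sigma>" using eS eb sub by simp
      have fD: "emeasure lborel (ball x R - S) < \<infinity>"
        by (rule le_less_trans[OF emeasure_mono emeasure_lborel_ball_finite]) (auto simp: Sb)
      then obtain d where d: "emeasure lborel (ball x R - S) = ennreal d" "d \<ge> 0"
        using fD by (cases "emeasure lborel (ball x R - S)" rule: ennreal_cases) auto
      have "2 * \<sigma> \<le> d + \<sigma>" using le d sp by (simp add: ennreal_plus[symmetric] del: ennreal_plus)
      then have sd: "\<sigma> \<le> d" by simp
      have "ennreal c0 = ennreal (h powr p / R powr (2 * real N)) * ennreal \<sigma>"
        unfolding c0_def R2N using sp \<omega> by (simp add: ennreal_mult[symmetric] power2_eq_square field_simps)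
      also have "\<dots> \<le> ennreal (h powr p / R powr (2 * real N)) * emeasure lborel (ball x R - S)"
        using sd d by (intro mult_left_mono) auto
      also have "\<dots> = (\<integral>\<^sup>+y. ennreal (h powr p / R powr (2 * real N)) * indicator (ball x R - S) y \<partial>lborel)"
        by (simp add: nn_integral_cmult_indicator)
      also have "\<dots> \<le> (\<integral>\<^sup>+y. ennreal (\<bar>f x - f y\<bar> powr p / norm (x - y) powr (2 * real DIM('a))) \<partial>lborel)"
      proof (intro nn_integral_mono)
        fix y
        show "ennreal (h powr p / R powr (2 * real N)) * indicator (ball x R - S) y
              \<le> ennreal (\<bar>f x - f y\<bar> powr p / norm (x - y) powr (2 * real DIM('a)))"
        proof (cases "y \<in> ball x R - S")
          case True
          then have yS: "y \<notin> S" and yb: "dist x y < R" by auto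
          have "x \<in> S" using x AS by auto
          then have "x \<noteq> y" using yS by auto
          then have np: "norm (x - y) > 0" by simp
          have "h powr p \<le> \<bar>f x - f y\<bar> powr p" using sep[OF x yS] h p by (intro powr_mono2) auto
          moreover have "norm (x - y) powr (2 * real N) \<le> R powr (2 * real N)"
            using yb np by (intro powr_mono2) (auto simp: dist_norm)
          moreover have "norm (x - y) powr (2 * real N) > 0" using np by simp
          ultimately have "h powr p / R powr (2 * real N) \<le> \<bar>f x - f y\<bar> powr p / norm (x - y) powr (2 * real N)"
            by (intro frac_le) auto
          then show ?thesis using True by (simp add: N_def)
        qed simp
      qed
      finally show ?thesis .
    qed
    have "ennreal c0 * emeasure lborel A = (\<integral>\<^sup>+x. ennreal c0 * indicator A x \<partial>lborel)"
      by (simp add: nn_integral_cmult_indicator)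
    also have "\<dots> \<le> (\<integral>\<^sup>+x. (\<integral>\<^sup>+y. ennreal (\<bar>f x - f y\<bar> powr p / norm (x - y) powr (2 * real DIM('a))) \<partial>lborel) \<partial>lborel)"
      by (intro nn_integral_mono) (auto simp: indicator_def inner)
    also have "\<dots> = En p f"
      unfolding En_def
      by (subst lborel.nn_integral_fst[symmetric]) auto
    finally have *: "ennreal c0 * emeasure lborel A \<le> En p f" .
    have "ennreal ((unit_ball_vol DIM('a))^2 / 4 * h powr p) = ennreal \<sigma> * ennreal c0"
      unfolding c0_def \<omega>_def N_def using sp by (simp add: ennreal_mult[symmetric] field_simps)
    then show ?thesis using mult_left_mono[OF *, of "ennreal \<sigma>"] eS by (simp add: mult.assoc)
  qed
qed

lemma powr_superadd:
  fixes x y p :: real assumes "x \<ge> 0" "y \<ge> 0" "p \<ge> 1"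
  shows "x powr p + y powr p \<le> (x + y) powr p"
proof (cases "x + y = 0")
  case True
  then have "x = 0" "y = 0" using assms by auto
  then show ?thesis using assms by simp
next
  case False
  then have s: "x + y > 0" using assms by linarith
  have "x powr p = x * x powr (p - 1)" 
    using assms by (cases "x = 0") (auto simp: powr_diff)
  also have "\<dots> \<le> x * (x + y) powr (p - 1)"
    using assms by (intro mult_left_mono powr_mono2) auto
  finally have 1: "x powr p \<le> x * (x + y) powr (p - 1)" .
  have "y powr p = y * y powr (p - 1)" 
    using assms by (cases "y = 0") (auto simp: powr_diff)
  also have "\<dots> \<le> y * (x + y) powr (p - 1)"
    using assms by (intro mult_left_mono powr_mono2) auto
  finally have 2: "y powr p \<le> y * (x + y) powr (p - 1)" .
  have "(x + y) powr p = (x + y) * (x + y) powr (p - 1)"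
    using s by (simp add: powr_diff)
  then show ?thesis using 1 2 by (simp add: distrib_right)
qed

lemma powr_superadd_sum:
  fixes f :: "nat \<Rightarrow> real" assumes "\<And>k. f k \<ge> 0" "p \<ge> 1"
  shows "(\<Sum>k<n. f k powr p) \<le> (\<Sum>k<n. f k) powr p"
proof (induction n)
  case 0 then show ?case by simp
next
  case (Suc n)
  have "(\<Sum>k<Suc n. f k powr p) = (\<Sum>k<n. f k powr p) + f n powr p" by simp
  also have "\<dots> \<le> (\<Sum>k<n. f k) powr p + f n powr p" using Suc by simp
  also have "\<dots> \<le> ((\<Sum>k<n. f k) + f n) powr p"
    using assms by (intro powr_superadd) (auto intro: sum_nonneg)
  finally show ?case by simp
qed

definition phi :: "real \<Rightarrow> real \<Rightarrow> real \<Rightarrow> real" where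
  "phi t h r = min (max (r - t) 0) h"

definition psi :: "real \<Rightarrow> real \<Rightarrow> real" where
  "psi t r = max (r - t) 0"

lemma min_max_aux:
  fixes m h r t :: real assumes "0 \<le> m" "0 \<le> h"
  shows "min (max (r - t) 0) m + min (max (r - (t + m)) 0) h = min (max (r - t) 0) (m + h)"
  using assms by (auto simp: min_def max_def)

lemma phi_telescope:
  assumes "h \<ge> 0"
  shows "(\<Sum>k<n. phi (t + real k * h) h r) = min (psi t r) (real n * h)"
proof (induction n)
  case 0 then show ?case by (simp add: psi_def)
next
  case (Suc n)
  have "(\<Sum>k<Suc n. phi (t + real k * h) h r) = min (psi t r) (real n * h) + phi (t + real n * h) h r"
    using Suc by simp
  also have "\<dots> = min (psi t r) (real n * h + h)"
    unfolding phi_def psi_def using assms by (intro min_max_aux) auto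
  finally show ?case by (simp add: algebra_simps)
qed

lemma phi_mono: "b \<le> a \<Longrightarrow> phi t h b \<le> phi t h a"
  by (simp add: phi_def min_def max_def)

lemma layers_pt_aux:
  assumes "h > 0" "p \<ge> 1" "b \<le> a"
  shows "(\<Sum>k<n. \<bar>phi (t + real k * h) h a - phi (t + real k * h) h b\<bar> powr p) \<le> \<bar>psi t a - psi t b\<bar> powr p"
proof -
  have "(\<Sum>k<n. \<bar>phi (t + real k * h) h a - phi (t + real k * h) h b\<bar> powr p)
      \<le> (\<Sum>k<n. \<bar>phi (t + real k * h) h a - phi (t + real k * h) h b\<bar>) powr p"
    using assms by (intro powr_superadd_sum) auto
  also have "(\<Sum>k<n. \<bar>phi (t + real k * h) h a - phi (t + real k * h) h b\<bar>)
      = (\<Sum>k<n. phi (t + real k * h) h a) - (\<Sum>k<n. phi (t + real k * h) h b)"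
    using phi_mono[OF assms(3)] by (simp add: sum_subtractf)
  also have "\<dots> = min (psi t a) (real n * h) - min (psi t b) (real n * h)"
    using assms by (simp add: phi_telescope)
  also have "(\<dots>) powr p \<le> \<bar>psi t a - psi t b\<bar> powr p"
    using assms by (intro powr_mono2) (auto simp: psi_def min_def max_def)
  finally show ?thesis .
qed

lemma layers_pt:
  assumes "h > 0" "p \<ge> 1"
  shows "(\<Sum>k<n. \<bar>phi (t + real k * h) h a - phi (t + real k * h) h b\<bar> powr p) \<le> \<bar>psi t a - psi t b\<bar> powr p"
proof (cases "b \<le> a")
  case True then show ?thesis using layers_pt_aux assms by blast
next
  case False
  then have "a \<le> b" by simp
  from layers_pt_aux[OF assms this, where n=n and t=t] show ?thesis by (simp add: abs_minus_commute)
qed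

lemma psi_lip: "\<bar>psi t a - psi t b\<bar> \<le> \<bar>a - b\<bar>"
  by (simp add: psi_def max_def)

lemma powr_add_le:
  fixes a b q :: real assumes "a \<ge> 0" "b \<ge> 0" "q > 0"
  shows "(a + b) powr q \<le> 2 powr q * (a powr q + b powr q)"
proof -
  have "(a + b) powr q \<le> (2 * max a b) powr q" using assms by (intro powr_mono2) auto
  also have "\<dots> = 2 powr q * max a b powr q" using assms by (simp add: powr_mult)
  also have "max a b powr q \<le> a powr q + b powr q" using assms by (simp add: max_def)
  finally show ?thesis by simp
qed

lemma amgm_pow:
  fixes e :: "nat \<Rightarrow> real" assumes "\<And>k. e k \<ge> 0" "n \<ge> 1"
  shows "(\<Prod>k<n. e k) \<le> ((\<Sum>k<n. e k) / real n) ^ n"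
proof -
  have P: "(\<Prod>k<n. e k) \<ge> 0" using assms by (simp add: prod_nonneg)
  have "(\<Prod>k<n. e k) powr (1 / card {..<n}) \<le> (\<Sum>k<n. e k / card {..<n})"
  proof (intro arith_geom_mean)
    have "0 \<in> {..<n}" using assms by simp
    then show "{..<n} \<noteq> {}" by blast
  qed (use assms in auto)
  then have a: "(\<Prod>k<n. e k) powr (1 / real n) \<le> (\<Sum>k<n. e k) / real n"
    by (simp add: sum_divide_distrib)
  have "(\<Prod>k<n. e k) = ((\<Prod>k<n. e k) powr (1 / real n)) ^ n"
  proof (cases "(\<Prod>k<n. e k) = 0")
    case True
    have "0 < n" using assms by simp
    then show ?thesis unfolding True by simp
  next
    case False
    then have "(\<Prod>k<n. e k) > 0" using P by (simp only: less_le) simp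
    then have X: "(\<Prod>k<n. e k) powr (1 / real n) > 0" by (rule powr_gt_zero[THEN iffD2, OF less_imp_neq[symmetric]])
    have "((\<Prod>k<n. e k) powr (1 / real n)) ^ n = ((\<Prod>k<n. e k) powr (1 / real n)) powr (real n)"
      using X by (simp add: powr_realpow)
    also have "\<dots> = (\<Prod>k<n. e k) powr (1 / real n * real n)" by (simp add: powr_powr)
    also have "\<dots> = (\<Prod>k<n. e k)" using assms P by simp
    finally show ?thesis by simp
  qed
  also have "\<dots> \<le> ((\<Sum>k<n. e k) / real n) ^ n"
    using a by (intro power_mono) auto
  finally show ?thesis .
qed

lemma pow_powr_nat:
  fixes y q :: real assumes "y \<ge> 0" "n \<ge> 1"
  shows "(y powr q) ^ n = y powr (q * real n)"
proof (cases "y = 0")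
  case True then show ?thesis using assms by simp
next
  case False
  then have y: "y > 0" using assms by simp
  have "(y powr q) ^ n = (y powr q) powr (real n)" using y by (simp add: powr_realpow)
  also have "\<dots> = y powr (q * real n)" by (simp add: powr_powr)
  finally show ?thesis .
qed

lemma Rfun_taylor:
  fixes \<alpha> q r :: real assumes "\<alpha> \<ge> 0"
  shows "\<exists>\<tau>. \<bar>\<tau>\<bar> \<le> \<alpha> * \<bar>r\<bar> powr q \<and>
     exp (\<alpha> * \<bar>r\<bar> powr q) - (\<Sum>k\<in>{0..K}. \<alpha> ^ k / fact k * (\<bar>r\<bar> powr q) ^ k)
     = exp \<tau> / fact (Suc K) * (\<alpha> * \<bar>r\<bar> powr q) ^ (Suc K)"
proof -
  define x where "x = \<alpha> * \<bar>r\<bar> powr q"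
  have x: "x \<ge> 0" using assms unfolding x_def by simp
  obtain \<tau> where t: "\<bar>\<tau>\<bar> \<le> \<bar>x\<bar>" "exp x = (\<Sum>m<Suc K. (x ^ m) / fact m) + (exp \<tau> / fact (Suc K)) * x ^ (Suc K)"
    using Maclaurin_exp_le[of x "Suc K"] by blast
  have "(\<Sum>k\<in>{0..K}. \<alpha> ^ k / fact k * (\<bar>r\<bar> powr q) ^ k) = (\<Sum>m<Suc K. (x ^ m) / fact m)"
    unfolding x_def by (intro sum.cong) (auto simp: power_mult_distrib)
  then show ?thesis using t x unfolding x_def[symmetric] by (intro exI[of _ \<tau>]) auto
qed

lemma Rfun_nonneg:
  assumes "\<alpha> \<ge> 0" shows "Rfun N s p \<alpha> r \<ge> 0"
proof -
  obtain \<tau> where "Rfun N s p \<alpha> r = exp \<tau> / fact (Suc (kp p - 2)) * (\<alpha> * \<bar>r\<bar> powr (real N / (real N - s))) ^ (Suc (kp p - 2))"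
    using Rfun_taylor[OF assms, of r "real N / (real N - s)" "kp p - 2"] unfolding Rfun_def by blast
  then show ?thesis using assms by simp
qed

lemma Rfun_le_exp:
  assumes "\<alpha> \<ge> 0" shows "Rfun N s p \<alpha> r \<le> exp (\<alpha> * \<bar>r\<bar> powr (real N / (real N - s)))"
  unfolding Rfun_def using assms by (auto intro!: sum_nonneg)

lemma Rfun_small:
  fixes T :: real
  assumes a: "\<alpha> \<ge> 0" and T: "T \<ge> 1" and r: "\<bar>r\<bar> \<le> T" and q: "real N / (real N - s) > 0"
    and qp: "real N / (real N - s) * real (Suc (kp p - 2)) \<ge> p"
  shows "Rfun N s p \<alpha> r \<le> exp (\<alpha> * T powr (real N / (real N - s))) * \<alpha> ^ Suc (kp p - 2) / fact (Suc (kp p - 2))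
       * T powr (real N / (real N - s) * real (Suc (kp p - 2)) - p) * \<bar>r\<bar> powr p"
proof -
  define q where "q = real N / (real N - s)"
  define K where "K = kp p - 2"
  obtain \<tau> where t: "\<bar>\<tau>\<bar> \<le> \<alpha> * \<bar>r\<bar> powr q" and eq: "Rfun N s p \<alpha> r = exp \<tau> / fact (Suc K) * (\<alpha> * \<bar>r\<bar> powr q) ^ (Suc K)"
    using Rfun_taylor[OF a, of r q K] unfolding Rfun_def q_def K_def by blast
  have "exp \<tau> \<le> exp (\<alpha> * T powr q)"
  proof -
    have "\<alpha> * \<bar>r\<bar> powr q \<le> \<alpha> * T powr q" using a r q unfolding q_def by (intro mult_left_mono powr_mono2) auto
    then show ?thesis using t by simp
  qed
  moreover have "(\<alpha> * \<bar>r\<bar> powr q) ^ (Suc K) \<le> \<alpha> ^ Suc K * (T powr (q * real (Suc K) - p) * \<bar>r\<bar> powr p)"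
  proof -
    have "(\<alpha> * \<bar>r\<bar> powr q) ^ (Suc K) = \<alpha> ^ Suc K * \<bar>r\<bar> powr (q * real (Suc K))"
      using pow_powr_nat[of "\<bar>r\<bar>" "Suc K" q] by (simp only: power_mult_distrib)
    also have "\<bar>r\<bar> powr (q * real (Suc K)) = \<bar>r\<bar> powr (q * real (Suc K) - p) * \<bar>r\<bar> powr p"
      by (simp add: powr_add[symmetric])
    also have "\<dots> \<le> T powr (q * real (Suc K) - p) * \<bar>r\<bar> powr p"
      using qp r unfolding q_def K_def by (intro mult_right_mono powr_mono2) auto
    finally show ?thesis using a by (simp add: mult_left_mono)
  qed
  ultimately have "Rfun N s p \<alpha> r \<le> exp (\<alpha> * T powr q) / fact (Suc K) * (\<alpha> ^ Suc K * (T powr (q * real (Suc K) - p) * \<bar>r\<bar> powr p))"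
    unfolding eq using a by (intro mult_mono divide_right_mono) auto
  then show ?thesis unfolding q_def K_def by (simp add: field_simps)
qed

lemma layer_energy:
  fixes u :: "'a::euclidean_space \<Rightarrow> real"
  assumes [measurable]: "u \<in> borel_measurable lborel" and h: "h > 0" and p: "p \<ge> 1"
  shows "(\<Sum>k<n. En p (\<lambda>x. phi (t + real k * h) h \<bar>u x\<bar>)) \<le> En p (\<lambda>x. psi t \<bar>u x\<bar>)"
proof -
  have "(\<Sum>k<n. En p (\<lambda>x. phi (t + real k * h) h \<bar>u x\<bar>)) =
    (\<integral>\<^sup>+z. (\<Sum>k<n. ennreal (\<bar>phi (t + real k * h) h \<bar>u (fst z)\<bar> - phi (t + real k * h) h \<bar>u (snd z)\<bar>\<bar> powr p
        / norm (fst z - snd z) powr (2 * real DIM('a)))) \<partial>(lborel \<Otimes>\<^sub>M lborel))"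
    unfolding En_def by (subst nn_integral_sum) (auto simp: phi_def)
  also have "\<dots> \<le> En p (\<lambda>x. psi t \<bar>u x\<bar>)"
    unfolding En_def
  proof (intro nn_integral_mono)
    fix z :: "'a \<times> 'a"
    have "(\<Sum>k<n. ennreal (\<bar>phi (t + real k * h) h \<bar>u (fst z)\<bar> - phi (t + real k * h) h \<bar>u (snd z)\<bar>\<bar> powr p
        / norm (fst z - snd z) powr (2 * real DIM('a))))
      = ennreal ((\<Sum>k<n. \<bar>phi (t + real k * h) h \<bar>u (fst z)\<bar> - phi (t + real k * h) h \<bar>u (snd z)\<bar>\<bar> powr p)
        / norm (fst z - snd z) powr (2 * real DIM('a)))"
      by (subst sum_ennreal) (auto simp: sum_divide_distrib)
    also have "\<dots> \<le> ennreal (\<bar>psi t \<bar>u (fst z)\<bar> - psi t \<bar>u (snd z)\<bar>\<bar> powr p / norm (fst z - snd z) powr (2 * real DIM('a)))"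
      using layers_pt[OF h p] by (intro ennreal_leI divide_right_mono) auto
    finally show "(\<Sum>k<n. ennreal (\<bar>phi (t + real k * h) h \<bar>u (fst z)\<bar> - phi (t + real k * h) h \<bar>u (snd z)\<bar>\<bar> powr p
        / norm (fst z - snd z) powr (2 * real DIM('a))))
      \<le> ennreal (\<bar>psi t \<bar>u (fst z)\<bar> - psi t \<bar>u (snd z)\<bar>\<bar> powr p / norm (fst z - snd z) powr (2 * real DIM('a)))" .
  qed
  finally show ?thesis .
qed

definition cc :: "nat \<Rightarrow> real" where "cc N = (unit_ball_vol (real N))^2 / 4"

lemma cc_pos: "cc N > 0"
proof -
  have X: "unit_ball_vol (real N) > 0" by (rule unit_ball_vol_pos) simp
  then have "unit_ball_vol (real N) \<noteq> 0" by linarith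
  then show ?thesis unfolding cc_def by simp
qed

lemma decay_ind:
  fixes u :: "'a::euclidean_space \<Rightarrow> real"
  assumes [measurable]: "u \<in> borel_measurable lborel" and h: "h > 0" and p: "p > 0"
    and Bt: "emeasure lborel {x. t \<le> \<bar>u x\<bar>} < \<infinity>"
  shows "ennreal (cc DIM('a) ^ n * h powr (p * real n)) * emeasure lborel {x. t + real n * h \<le> \<bar>u x\<bar>}
     \<le> emeasure lborel {x. t \<le> \<bar>u x\<bar>} * (\<Prod>k<n. En p (\<lambda>x. phi (t + real k * h) h \<bar>u x\<bar>))"
proof (induction n)
  case 0 then show ?case by simp
next
  case (Suc n)
  define S where "S = {x. t + real n * h < \<bar>u x\<bar>}"
  define A where "A = {x. t + real (Suc n) * h \<le> \<bar>u x\<bar>}"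
  have ms[measurable]: "S \<in> sets lborel" "A \<in> sets lborel" unfolding S_def A_def by auto
  have ms2: "S \<in> sets borel" "A \<in> sets borel" using ms by auto
  have SB: "emeasure lborel S \<le> emeasure lborel {x. t + real n * h \<le> \<bar>u x\<bar>}"
    unfolding S_def by (intro emeasure_mono) auto
  have SB0: "emeasure lborel S \<le> emeasure lborel {x. t \<le> \<bar>u x\<bar>}"
    unfolding S_def using h by (intro emeasure_mono) (auto intro: order_trans[of _ "t + real n * h"])
  have cap1: "ennreal (cc DIM('a) * h powr p) * emeasure lborel A \<le> emeasure lborel S * En p (\<lambda>x. phi (t + real n * h) h \<bar>u x\<bar>)"
    unfolding cc_def
  proof (rule cap)
    show "emeasure lborel S < \<infinity>" using SB0 Bt by (rule le_less_trans)
    show "A \<subseteq> S" unfolding A_def S_def using h by (auto simp: algebra_simps)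
    fix x y assume "x \<in> A" "y \<notin> S"
    then show "h \<le> \<bar>phi (t + real n * h) h \<bar>u x\<bar> - phi (t + real n * h) h \<bar>u y\<bar>\<bar>"
      unfolding A_def S_def phi_def using h by (auto simp: algebra_simps min_def max_def)
  qed (use h p ms2 in \<open>auto simp: phi_def\<close>)
  have e: "ennreal (cc DIM('a) ^ Suc n * h powr (p * real (Suc n))) = ennreal (cc DIM('a) ^ n * h powr (p * real n)) * ennreal (cc DIM('a) * h powr p)"
    using cc_pos[of "DIM('a)"] h by (simp add: ennreal_mult[symmetric] powr_add[symmetric] algebra_simps)
  have "ennreal (cc DIM('a) ^ Suc n * h powr (p * real (Suc n))) * emeasure lborel A
     = ennreal (cc DIM('a) ^ n * h powr (p * real n)) * (ennreal (cc DIM('a) * h powr p) * emeasure lborel A)"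
    unfolding e by (simp add: mult.assoc)
  also have "\<dots> \<le> ennreal (cc DIM('a) ^ n * h powr (p * real n)) * (emeasure lborel {x. t + real n * h \<le> \<bar>u x\<bar>} * En p (\<lambda>x. phi (t + real n * h) h \<bar>u x\<bar>))"
    using cap1 SB by (intro mult_left_mono order_trans[OF cap1] mult_right_mono) auto
  also have "\<dots> = (ennreal (cc DIM('a) ^ n * h powr (p * real n)) * emeasure lborel {x. t + real n * h \<le> \<bar>u x\<bar>}) * En p (\<lambda>x. phi (t + real n * h) h \<bar>u x\<bar>)"
    by (simp add: mult.assoc)
  also have "\<dots> \<le> (emeasure lborel {x. t \<le> \<bar>u x\<bar>} * (\<Prod>k<n. En p (\<lambda>x. phi (t + real k * h) h \<bar>u x\<bar>))) * En p (\<lambda>x. phi (t + real n * h) h \<bar>u x\<bar>)"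
    using Suc.IH by (intro mult_right_mono) auto
  also have "\<dots> = emeasure lborel {x. t \<le> \<bar>u x\<bar>} * (\<Prod>k<Suc n. En p (\<lambda>x. phi (t + real k * h) h \<bar>u x\<bar>))"
    by (simp add: mult.assoc)
  finally show ?case unfolding A_def .
qed

lemma decay_final:
  fixes u :: "'a::euclidean_space \<Rightarrow> real"
  assumes [measurable]: "u \<in> borel_measurable lborel" and p: "p > 1"
    and Bt: "emeasure lborel {x. t \<le> \<bar>u x\<bar>} < \<infinity>"
    and G: "En p (\<lambda>x. psi t \<bar>u x\<bar>) \<le> ennreal g" and g: "g \<ge> 0"
  shows "emeasure lborel {x. t + real n powr (1 - 1/p) \<le> \<bar>u x\<bar>} \<le> emeasure lborel {x. t \<le> \<bar>u x\<bar>} * ennreal ((g / cc DIM('a))^n)"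
proof (cases "n = 0")
  case True then show ?thesis by simp
next
  case False
  then have n: "n \<ge> 1" by simp
  define c where "c = cc DIM('a)"
  have c: "c > 0" unfolding c_def by (rule cc_pos)
  define h where "h = real n powr (- 1 / p)"
  have h: "h > 0" unfolding h_def using n by simp
  have nh: "real n * h = real n powr (1 - 1/p)"
  proof -
    have "real n * h = real n powr 1 * real n powr (- 1 / p)" unfolding h_def using n by simp
    also have "\<dots> = real n powr (1 + - 1 / p)" by (rule powr_add[symmetric])
    finally show ?thesis by simp
  qed
  have hp: "h powr (p * real n) = 1 / real n ^ n"
  proof -
    have "h powr (p * real n) = real n powr (- 1 / p * (p * real n))" unfolding h_def by (simp add: powr_powr)
    also have "- 1 / p * (p * real n) = - real n" using p by simp
    also have "real n powr (- real n) = 1 / real n ^ n" using n by (simp add: powr_minus powr_realpow divide_inverse)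
    finally show ?thesis .
  qed
  define F where "F k = En p (\<lambda>x. phi (t + real k * h) h \<bar>u x\<bar>)" for k
  have sumF: "(\<Sum>k<n. F k) \<le> ennreal g"
    unfolding F_def using layer_energy[of u h p, where n=n and t=t] h p G by (auto intro: order_trans)
  have Fle: "F k \<le> ennreal g" if "k < n" for k
  proof -
    have "F k \<le> (\<Sum>k<n. F k)" using that by (intro member_le_sum) auto
    then show ?thesis using sumF by (rule order_trans)
  qed
  define f where "f k = enn2real (F k)" for k
  have Ff: "F k = ennreal (f k)" if "k < n" for k
    using Fle[OF that] unfolding f_def by (cases "F k") (auto simp: top_unique)
  have f0: "f k \<ge> 0" for k unfolding f_def by simp
  have "(\<Sum>k<n. F k) = (\<Sum>k<n. ennreal (f k))" by (rule sum.cong) (auto simp: Ff)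
  also have "\<dots> = ennreal (\<Sum>k<n. f k)" by (rule sum_ennreal) (rule f0)
  finally have "ennreal (\<Sum>k<n. f k) = (\<Sum>k<n. F k)" by simp
  then have "ennreal (\<Sum>k<n. f k) \<le> ennreal g" using sumF by (rule ord_eq_le_trans)
  then have sf: "(\<Sum>k<n. f k) \<le> g" using g by (rule ennreal_le_iff[THEN iffD1, rotated])
  have "(\<Prod>k<n. F k) = (\<Prod>k<n. ennreal (f k))" by (rule prod.cong) (auto simp: Ff)
  also have "\<dots> = ennreal (\<Prod>k<n. f k)" by (rule prod_ennreal) (rule f0)
  also have "(\<Prod>k<n. f k) \<le> ((\<Sum>k<n. f k) / real n) ^ n" using f0 n by (rule amgm_pow)
  also have "\<dots> \<le> (g / real n) ^ n" using sf n sum_nonneg[of "{..<n}" f] f0 by (intro power_mono divide_right_mono) auto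
  finally have PF: "(\<Prod>k<n. F k) \<le> ennreal ((g / real n) ^ n)" by (simp add: ennreal_leI)
  define a where "a = c ^ n / real n ^ n"
  have a: "a > 0" unfolding a_def using c n by simp
  have main: "ennreal a * emeasure lborel {x. t + real n powr (1 - 1/p) \<le> \<bar>u x\<bar>}
      \<le> emeasure lborel {x. t \<le> \<bar>u x\<bar>} * ennreal ((g / real n) ^ n)"
  proof -
    have "ennreal a * emeasure lborel {x. t + real n powr (1 - 1/p) \<le> \<bar>u x\<bar>}
       = ennreal (cc DIM('a) ^ n * h powr (p * real n)) * emeasure lborel {x. t + real n * h \<le> \<bar>u x\<bar>}"
      unfolding a_def hp nh c_def by simp
    also have "\<dots> \<le> emeasure lborel {x. t \<le> \<bar>u x\<bar>} * (\<Prod>k<n. F k)"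
      unfolding F_def using p h Bt by (intro decay_ind) auto
    also have "\<dots> \<le> emeasure lborel {x. t \<le> \<bar>u x\<bar>} * ennreal ((g / real n) ^ n)"
      using PF by (intro mult_left_mono) auto
    finally show ?thesis .
  qed
  have "emeasure lborel {x. t + real n powr (1 - 1/p) \<le> \<bar>u x\<bar>}
      = ennreal (1 / a) * (ennreal a * emeasure lborel {x. t + real n powr (1 - 1/p) \<le> \<bar>u x\<bar>})"
    using a by (simp add: mult.assoc[symmetric] ennreal_mult[symmetric])
  also have "\<dots> \<le> ennreal (1 / a) * (emeasure lborel {x. t \<le> \<bar>u x\<bar>} * ennreal ((g / real n) ^ n))"
    using main by (intro mult_left_mono) auto
  also have "\<dots> = emeasure lborel {x. t \<le> \<bar>u x\<bar>} * ennreal (1 / a * (g / real n) ^ n)"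
  proof -
    have "ennreal (1 / a * (g / real n) ^ n) = ennreal (1 / a) * ennreal ((g / real n) ^ n)"
      using a g by (intro ennreal_mult) auto
    then show ?thesis by (simp only: mult_ac)
  qed
  also have "1 / a * (g / real n) ^ n = (g / c) ^ n"
    unfolding a_def using c n by (simp add: power_divide field_simps)
  finally show ?thesis unfolding c_def .
qed

lemma tail_pt:
  fixes w t q r \<alpha> :: real
  assumes w: "t \<le> w" and t: "t \<ge> 0" and q: "q > 0" and r: "r > 0" and qr: "q * r = 1" and a: "\<alpha> \<ge> 0"
  shows "\<exists>m::nat. t + real m powr r \<le> w \<and> exp (\<alpha> * w powr q) \<le> exp (\<alpha> * 2 powr q * (t powr q + real m + 1))"
proof -
  define d where "d = w - t"
  have d: "d \<ge> 0" using w unfolding d_def by simp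
  define m where "m = nat \<lfloor>d powr q\<rfloor>"
  have X0: "0 \<le> d powr q" by simp
  have rm: "real m = of_int \<lfloor>d powr q\<rfloor>" unfolding m_def using X0 by simp
  have m1: "real m \<le> d powr q" unfolding rm by (rule of_int_floor_le)
  have m2: "d powr q < real m + 1" unfolding rm by (rule real_of_int_floor_add_one_gt)
  have dd: "(d powr q) powr r = d" using qr d by (simp add: powr_powr)
  have "real m powr r \<le> (d powr q) powr r" using m1 r by (intro powr_mono2) auto
  then have A: "t + real m powr r \<le> w" using dd unfolding d_def by simp
  have "(d powr q) powr r < (real m + 1) powr r" using m2 r d by (intro powr_less_mono2) auto
  then have B: "w < t + (real m + 1) powr r" using dd unfolding d_def by simp
  have "w powr q \<le> (t + (real m + 1) powr r) powr q" using B w t q by (intro powr_mono2) auto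
  also have "\<dots> \<le> 2 powr q * (t powr q + ((real m + 1) powr r) powr q)" using t q by (intro powr_add_le) auto
  also have "((real m + 1) powr r) powr q = real m + 1" using qr by (simp add: powr_powr mult.commute)
  finally have "w powr q \<le> 2 powr q * (t powr q + real m + 1)" by (simp add: add.assoc)
  then have "exp (\<alpha> * w powr q) \<le> exp (\<alpha> * 2 powr q * (t powr q + real m + 1))"
    using a by (simp add: mult_left_mono mult.assoc)
  with A show ?thesis by blast
qed

lemma ennreal_le_suminf: "(f :: nat \<Rightarrow> ennreal) m \<le> (\<Sum>n. f n)"
  by (metis ennreal_suminf_lessD not_le order.irrefl)

lemma tail_integral:
  fixes u :: "'a::euclidean_space \<Rightarrow> real"
  assumes [measurable]: "u \<in> borel_measurable lborel" and p: "p > 1"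
    and q: "q > 0" and qr: "q * (1 - 1/p) = 1" and a: "\<alpha> \<ge> 0" and t: "t \<ge> 0"
    and Bt: "emeasure lborel {x. t \<le> \<bar>u x\<bar>} < \<infinity>"
    and G: "En p (\<lambda>x. psi t \<bar>u x\<bar>) \<le> ennreal g" and g: "g \<ge> 0"
    and small: "exp (\<alpha> * 2 powr q) * g / cc DIM('a) < 1"
  shows "(\<integral>\<^sup>+x. ennreal (exp (\<alpha> * \<bar>u x\<bar> powr q)) * indicator {x. t \<le> \<bar>u x\<bar>} x \<partial>lborel) < \<infinity>"
proof -
  define r where "r = 1 - 1/p"
  have r: "r > 0" unfolding r_def using p by (simp add: field_simps)
  define D where "D n = exp (\<alpha> * 2 powr q * (t powr q + real n + 1))" for n :: nat
  define I where "I n = {x. t + real n powr r \<le> \<bar>u x\<bar>}" for n :: nat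
  have [measurable]: "I n \<in> sets lborel" for n unfolding I_def by auto
  have Ib[measurable]: "I n \<in> sets borel" for n unfolding I_def by auto
  obtain bt where bt: "emeasure lborel {x. t \<le> \<bar>u x\<bar>} = ennreal bt" "bt \<ge> 0"
    using Bt by (cases "emeasure lborel {x. t \<le> \<bar>u x\<bar>}" rule: ennreal_cases) auto
  define c where "c = cc DIM('a)"
  have c: "c > 0" unfolding c_def by (rule cc_pos)
  define \<rho> where "\<rho> = exp (\<alpha> * 2 powr q) * g / c"
  have \<rho>: "\<rho> \<ge> 0" "\<rho> < 1" unfolding \<rho>_def c_def using small g c c_def by auto
  define K0 where "K0 = exp (\<alpha> * 2 powr q * (t powr q + 1))"
  have D: "D n = K0 * exp (\<alpha> * 2 powr q) ^ n" for n
    unfolding D_def K0_def by (simp add: exp_of_nat_mult[symmetric] exp_add[symmetric] algebra_simps)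
  have pt: "ennreal (exp (\<alpha> * \<bar>u x\<bar> powr q)) * indicator {x. t \<le> \<bar>u x\<bar>} x
      \<le> (\<Sum>n. ennreal (D n) * indicator (I n) x)" for x
  proof (cases "t \<le> \<bar>u x\<bar>")
    case True
    obtain m :: nat where m: "t + real m powr r \<le> \<bar>u x\<bar>" "exp (\<alpha> * \<bar>u x\<bar> powr q) \<le> D m"
      using tail_pt[OF True t q r _ a] qr unfolding D_def r_def by blast
    have "ennreal (exp (\<alpha> * \<bar>u x\<bar> powr q)) * indicator {x. t \<le> \<bar>u x\<bar>} x \<le> ennreal (D m) * indicator (I m) x"
      using m True unfolding I_def by (auto intro: ennreal_leI)
    also have "\<dots> \<le> (\<Sum>n. ennreal (D n) * indicator (I n) x)" by (rule ennreal_le_suminf)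
    finally show ?thesis .
  qed simp
  have "(\<integral>\<^sup>+x. ennreal (exp (\<alpha> * \<bar>u x\<bar> powr q)) * indicator {x. t \<le> \<bar>u x\<bar>} x \<partial>lborel)
     \<le> (\<integral>\<^sup>+x. (\<Sum>n. ennreal (D n) * indicator (I n) x) \<partial>lborel)"
    by (intro nn_integral_mono pt)
  also have "\<dots> = (\<Sum>n. \<integral>\<^sup>+x. ennreal (D n) * indicator (I n) x \<partial>lborel)"
    by (rule nn_integral_suminf) measurable
  also have "\<dots> = (\<Sum>n. ennreal (D n) * emeasure lborel (I n))"
    by (intro suminf_cong nn_integral_cmult_indicator) simp
  also have "\<dots> \<le> (\<Sum>n. ennreal (K0 * bt * \<rho> ^ n))"
  proof (intro suminf_le summableI)
    fix n
    have "emeasure lborel (I n) \<le> emeasure lborel {x. t \<le> \<bar>u x\<bar>} * ennreal ((g / c)^n)"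
      unfolding I_def r_def c_def by (rule decay_final[OF _ p Bt G g]) simp
    then have "ennreal (D n) * emeasure lborel (I n) \<le> ennreal (D n) * (ennreal bt * ennreal ((g / c)^n))"
      using bt by (intro mult_left_mono) auto
    also have "\<dots> = ennreal (D n * bt * (g / c)^n)"
      using bt g c by (simp add: ennreal_mult[symmetric] mult.assoc D_def)
    also have "D n * bt * (g / c)^n = K0 * bt * \<rho> ^ n"
      unfolding D \<rho>_def by (simp add: power_mult_distrib power_divide)
    finally show "ennreal (D n) * emeasure lborel (I n) \<le> ennreal (K0 * bt * \<rho> ^ n)" .
  qed
  also have "\<dots> < \<infinity>"
  proof -
    have sm: "summable (\<lambda>n. K0 * bt * \<rho> ^ n)"
      using \<rho> by (intro summable_mult summable_geometric) auto
    have "(\<Sum>n. ennreal (K0 * bt * \<rho> ^ n)) = ennreal (\<Sum>n. K0 * bt * \<rho> ^ n)"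
      using sm bt \<rho> by (intro suminf_ennreal2) (auto simp: K0_def)
    then show ?thesis by simp
  qed
  finally show ?thesis .
qed

lemma energy_tendsto:
  fixes u :: "'a::euclidean_space \<Rightarrow> real"
  assumes [measurable]: "u \<in> borel_measurable lborel" and p: "p > 0"
    and W: "(\<integral>\<^sup>+z. ennreal (\<bar>u (fst z) - u (snd z)\<bar> powr p / norm (fst z - snd z) powr (2 * real DIM('a))) \<partial>(lborel \<Otimes>\<^sub>M lborel)) < \<infinity>"
  shows "(\<lambda>i::nat. En p (\<lambda>x. psi (real i) \<bar>u x\<bar>)) \<longlonglongrightarrow> 0"
proof -
  have "(\<lambda>i::nat. \<integral>\<^sup>+z. ennreal (\<bar>psi (real i) \<bar>u (fst z)\<bar> - psi (real i) \<bar>u (snd z)\<bar>\<bar> powr p / norm (fst z - snd z) powr (2 * real DIM('a))) \<partial>(lborel \<Otimes>\<^sub>M lborel))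
     \<longlonglongrightarrow> (\<integral>\<^sup>+(z::'a \<times> 'a). 0 \<partial>(lborel \<Otimes>\<^sub>M lborel))"
  proof (rule nn_integral_dominated_convergence[where M="lborel \<Otimes>\<^sub>M lborel" and u'="\<lambda>z. 0" and u="\<lambda>i z. ennreal (\<bar>psi (real i) \<bar>u (fst z)\<bar> - psi (real i) \<bar>u (snd z)\<bar>\<bar> powr p / norm (fst z - snd z) powr (2 * real DIM('a)))" and w = "\<lambda>z. ennreal (\<bar>u (fst z) - u (snd z)\<bar> powr p / norm (fst z - snd z) powr (2 * real DIM('a)))"])
    show "(\<integral>\<^sup>+z. ennreal (\<bar>u (fst z) - u (snd z)\<bar> powr p / norm (fst z - snd z) powr (2 * real DIM('a))) \<partial>(lborel \<Otimes>\<^sub>M lborel)) < \<infinity>"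
      by (rule W)
    fix j :: nat
    show "AE z in lborel \<Otimes>\<^sub>M lborel. ennreal (\<bar>psi (real j) \<bar>u (fst z)\<bar> - psi (real j) \<bar>u (snd z)\<bar>\<bar> powr p / norm (fst z - snd z) powr (2 * real DIM('a)))
        \<le> ennreal (\<bar>u (fst z) - u (snd z)\<bar> powr p / norm (fst z - snd z) powr (2 * real DIM('a)))"
    proof (intro AE_I2 ennreal_leI divide_right_mono powr_mono2)
      fix z :: "'a \<times> 'a"
      have "\<bar>psi (real j) \<bar>u (fst z)\<bar> - psi (real j) \<bar>u (snd z)\<bar>\<bar> \<le> \<bar>\<bar>u (fst z)\<bar> - \<bar>u (snd z)\<bar>\<bar>" by (rule psi_lip)
      also have "\<dots> \<le> \<bar>u (fst z) - u (snd z)\<bar>" by (rule abs_triangle_ineq3)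
      finally show "\<bar>psi (real j) \<bar>u (fst z)\<bar> - psi (real j) \<bar>u (snd z)\<bar>\<bar> \<le> \<bar>u (fst z) - u (snd z)\<bar>" .
    qed (use p in auto)
  next
    show "AE z in lborel \<Otimes>\<^sub>M lborel. (\<lambda>i::nat. ennreal (\<bar>psi (real i) \<bar>u (fst z)\<bar> - psi (real i) \<bar>u (snd z)\<bar>\<bar> powr p / norm (fst z - snd z) powr (2 * real DIM('a)))) \<longlonglongrightarrow> 0"
    proof (intro AE_I2 tendsto_eventually)
      fix z :: "'a \<times> 'a"
      obtain N :: nat where N: "max \<bar>u (fst z)\<bar> \<bar>u (snd z)\<bar> \<le> real N" using real_arch_simple by blast
      show "\<forall>\<^sub>F i in sequentially. ennreal (\<bar>psi (real i) \<bar>u (fst z)\<bar> - psi (real i) \<bar>u (snd z)\<bar>\<bar> powr p / norm (fst z - snd z) powr (2 * real DIM('a))) = 0"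
      proof (rule eventually_sequentiallyI[of N])
        fix i assume "N \<le> i"
        then have "real N \<le> real i" by simp
        then have "psi (real i) \<bar>u (fst z)\<bar> = 0" "psi (real i) \<bar>u (snd z)\<bar> = 0" using N unfolding psi_def by auto
        then show "ennreal (\<bar>psi (real i) \<bar>u (fst z)\<bar> - psi (real i) \<bar>u (snd z)\<bar>\<bar> powr p / norm (fst z - snd z) powr (2 * real DIM('a))) = 0"
          by simp
      qed
    qed
  qed (auto simp: psi_def)
  then show ?thesis unfolding En_def by simp
qed

lemma cheb:
  fixes u :: "'a::euclidean_space \<Rightarrow> real"
  assumes [measurable]: "u \<in> borel_measurable lborel" and t: "t > 0" and p: "p > 0"
    and L: "(\<integral>\<^sup>+x. ennreal (\<bar>u x\<bar> powr p) \<partial>lborel) < \<infinity>"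
  shows "emeasure lborel {x. t \<le> \<bar>u x\<bar>} < \<infinity>"
proof -
  have "ennreal (t powr p) * emeasure lborel {x. t \<le> \<bar>u x\<bar>} = (\<integral>\<^sup>+x. ennreal (t powr p) * indicator {x. t \<le> \<bar>u x\<bar>} x \<partial>lborel)"
    by (rule nn_integral_cmult_indicator[symmetric]) measurable
  also have "\<dots> \<le> (\<integral>\<^sup>+x. ennreal (\<bar>u x\<bar> powr p) \<partial>lborel)"
    using t p by (intro nn_integral_mono) (auto simp: indicator_def intro!: ennreal_leI powr_mono2)
  also have "\<dots> < \<infinity>" by (rule L)
  finally have *: "ennreal (t powr p) * emeasure lborel {x. t \<le> \<bar>u x\<bar>} < \<infinity>" .
  show ?thesis
  proof (rule ccontr)
    assume "\<not> ?thesis"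
    then have "emeasure lborel {x. t \<le> \<bar>u x\<bar>} = \<infinity>" by (simp add: less_top[symmetric])
    then show False using * t by (simp add: ennreal_mult_eq_top_iff)
  qed
qed

theorem lemma4:
  fixes s p \<alpha> :: real and u :: "'a::euclidean_space \<Rightarrow> real"
  assumes "0 < s" "s < 1" "p > 2" "real DIM('a) = s * p"
    and "\<alpha> > 0"
    and "u \<in> frac_sobolev s p"
  shows "integrable lborel (\<lambda>x. Rfun DIM('a) s p \<alpha> (u x))"
proof -
  have um[measurable]: "u \<in> borel_measurable lborel"
    and Lp: "integrable lborel (\<lambda>x. \<bar>u x\<bar> powr p)"
    and Wi: "integrable (lborel \<Otimes>\<^sub>M lborel) (\<lambda>(x,y). \<bar>u x - u y\<bar> powr p / norm (x - y) powr (real DIM('a) + s * p))"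
    using assms(6) unfolding frac_sobolev_def by auto
  have p1: "p > 1" "p > 0" using assms(3) by auto
  have ex: "real DIM('a) + s * p = 2 * real DIM('a)" using assms(4) by simp
  have L: "(\<integral>\<^sup>+x. ennreal (\<bar>u x\<bar> powr p) \<partial>lborel) < \<infinity>"
    using Lp by (simp add: integrable_iff_bounded)
  have "integrable (lborel \<Otimes>\<^sub>M lborel) (\<lambda>z. \<bar>u (fst z) - u (snd z)\<bar> powr p / norm (fst z - snd z) powr (2 * real DIM('a)))"
    using Wi unfolding ex by (simp add: split_beta')
  then have W: "(\<integral>\<^sup>+z. ennreal (\<bar>u (fst z) - u (snd z)\<bar> powr p / norm (fst z - snd z) powr (2 * real DIM('a))) \<partial>(lborel \<Otimes>\<^sub>M lborel)) < \<infinity>"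
    by (simp add: integrable_iff_bounded)
  define q where "q = real DIM('a) / (real DIM('a) - s)"
  have D1: "real DIM('a) \<ge> 1" by (simp add: DIM_positive Suc_leI)
  have Ds: "real DIM('a) - s = s * (p - 1)" using assms(4) by (simp add: algebra_simps)
  have qeq: "q = p / (p - 1)"
  proof -
    have "q = real DIM('a) / (s * (p - 1))" unfolding q_def Ds ..
    also have "\<dots> = (s * p) / (s * (p - 1))" unfolding assms(4) ..
    also have "\<dots> = p / (p - 1)" using assms(1) by simp
    finally show ?thesis .
  qed
  have q: "q > 0" unfolding qeq using p1 by simp
  have qr: "q * (1 - 1/p) = 1" unfolding qeq using p1 by (simp add: field_simps)
  have qp: "q * real (Suc (kp p - 2)) \<ge> p"
  proof -
    have c3: "\<lceil>p\<rceil> \<ge> 3" using assms(3) by (simp add: le_ceiling_iff)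
    have n3: "3 \<le> nat \<lceil>p\<rceil>" using c3 by (simp add: le_nat_iff)
    have r3: "real (nat \<lceil>p\<rceil>) = of_int \<lceil>p\<rceil>" using c3 by simp
    have "real (Suc (kp p - 2)) = real (nat \<lceil>p\<rceil>) - 1" unfolding kp_def using n3 by (simp add: of_nat_diff)
    then have "real (Suc (kp p - 2)) = of_int \<lceil>p\<rceil> - 1" using r3 by simp
    also have "\<dots> \<ge> p - 1" by (simp add: ceiling_correct)
    finally have "q * real (Suc (kp p - 2)) \<ge> q * (p - 1)" using q by (intro mult_left_mono) auto
    moreover have "q * (p - 1) = p" unfolding qeq using p1 by simp
    ultimately show ?thesis by simp
  qed
  define c where "c = cc DIM('a)"
  have c: "c > 0" unfolding c_def by (rule cc_pos)
  define \<epsilon> where "\<epsilon> = c * exp (- (\<alpha> * 2 powr q)) / 2"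
  have \<epsilon>: "\<epsilon> > 0" unfolding \<epsilon>_def using c by simp
  have "\<forall>\<^sub>F i in sequentially. En p (\<lambda>x. psi (real i) \<bar>u x\<bar>) < ennreal \<epsilon>"
    using energy_tendsto[OF um p1(2) W] \<epsilon> by (intro order_tendstoD(2)) auto
  moreover have "\<forall>\<^sub>F i in sequentially. (1::nat) \<le> i" by (rule eventually_ge_at_top)
  ultimately obtain i :: nat where i: "En p (\<lambda>x. psi (real i) \<bar>u x\<bar>) < ennreal \<epsilon>" "1 \<le> i"
    by (metis (mono_tags, lifting) eventually_conj_iff eventually_sequentially order_refl)
  define t where "t = real i"
  have t: "t \<ge> 1" unfolding t_def using i by simp
  define g where "g = enn2real (En p (\<lambda>x. psi t \<bar>u x\<bar>))"
  have Eg: "En p (\<lambda>x. psi t \<bar>u x\<bar>) = ennreal g" and g0: "g \<ge> 0"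
    using i(1) unfolding g_def t_def by (cases "En p (\<lambda>x. psi (real i) \<bar>u x\<bar>)" rule: ennreal_cases; auto)+
  have "ennreal g < ennreal \<epsilon>" using i(1) Eg unfolding t_def by simp
  then have g\<epsilon>: "g < \<epsilon>" using g0 by (simp add: ennreal_less_iff)
  have small: "exp (\<alpha> * 2 powr q) * g / cc DIM('a) < 1"
  proof -
    have "exp (\<alpha> * 2 powr q) * g \<le> exp (\<alpha> * 2 powr q) * \<epsilon>" using g\<epsilon> by simp
    also have "\<dots> = c / 2" unfolding \<epsilon>_def by (simp add: exp_minus field_simps)
    finally show ?thesis using c unfolding c_def by simp
  qed
  have Bt: "emeasure lborel {x. t \<le> \<bar>u x\<bar>} < \<infinity>" using t p1 L by (intro cheb) auto
  have tail: "(\<integral>\<^sup>+x. ennreal (exp (\<alpha> * \<bar>u x\<bar> powr q)) * indicator {x. t \<le> \<bar>u x\<bar>} x \<partial>lborel) < \<infinity>"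
    using assms(5) t by (intro tail_integral[OF um p1(1) q qr _ _ Bt _ g0 small]) (auto simp: Eg)
  define C where "C = exp (\<alpha> * t powr q) * \<alpha> ^ Suc (kp p - 2) / fact (Suc (kp p - 2))
       * t powr (q * real (Suc (kp p - 2)) - p)"
  have C: "C \<ge> 0" unfolding C_def using assms(5) by simp
  have pt: "ennreal (norm (Rfun DIM('a) s p \<alpha> (u x))) \<le>
      ennreal (C * \<bar>u x\<bar> powr p) + ennreal (exp (\<alpha> * \<bar>u x\<bar> powr q)) * indicator {x. t \<le> \<bar>u x\<bar>} x" for x
  proof (cases "t \<le> \<bar>u x\<bar>")
    case True
    have "norm (Rfun DIM('a) s p \<alpha> (u x)) \<le> exp (\<alpha> * \<bar>u x\<bar> powr q)"
      using Rfun_nonneg[of \<alpha>] Rfun_le_exp[of \<alpha>] assms(5) unfolding q_def by auto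
    then show ?thesis using True by (simp add: ennreal_leI add_increasing)
  next
    case False
    have "norm (Rfun DIM('a) s p \<alpha> (u x)) \<le> C * \<bar>u x\<bar> powr p"
      using Rfun_nonneg[of \<alpha>] Rfun_small[of \<alpha> t "u x" "DIM('a)" s p] assms(5) t False q qp
      unfolding C_def q_def by auto
    then show ?thesis using False by (simp add: ennreal_leI)
  qed
  have meas: "(\<lambda>x. Rfun DIM('a) s p \<alpha> (u x)) \<in> borel_measurable lborel"
    unfolding Rfun_def by measurable
  have "(\<integral>\<^sup>+x. ennreal (norm (Rfun DIM('a) s p \<alpha> (u x))) \<partial>lborel)
      \<le> (\<integral>\<^sup>+x. ennreal (C * \<bar>u x\<bar> powr p) + ennreal (exp (\<alpha> * \<bar>u x\<bar> powr q)) * indicator {x. t \<le> \<bar>u x\<bar>} x \<partial>lborel)"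
    by (intro nn_integral_mono pt)
  also have "\<dots> = (\<integral>\<^sup>+x. ennreal (C * \<bar>u x\<bar> powr p) \<partial>lborel) + (\<integral>\<^sup>+x. ennreal (exp (\<alpha> * \<bar>u x\<bar> powr q)) * indicator {x. t \<le> \<bar>u x\<bar>} x \<partial>lborel)"
    by (rule nn_integral_add) measurable
  also have "(\<integral>\<^sup>+x. ennreal (C * \<bar>u x\<bar> powr p) \<partial>lborel) = ennreal C * (\<integral>\<^sup>+x. ennreal (\<bar>u x\<bar> powr p) \<partial>lborel)"
    using C by (simp add: ennreal_mult nn_integral_cmult)
  also have "ennreal C * (\<integral>\<^sup>+x. ennreal (\<bar>u x\<bar> powr p) \<partial>lborel) + (\<integral>\<^sup>+x. ennreal (exp (\<alpha> * \<bar>u x\<bar> powr q)) * indicator {x. t \<le> \<bar>u x\<bar>} x \<partial>lborel) < \<infinity>"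
    using L tail by (simp add: ennreal_mult_less_top)
  finally show ?thesis using meas by (simp add: integrable_iff_bounded)
qed

end
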